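(* Let $E$ be a finite directed graph and $X\subseteq\mathrm{Sink}(E)\cup\mathrm{Source}(E)$. Then $\mathrm{h}_{\mathrm{alg}}(KE)=\mathrm{h}_{\mathrm{alg}}(K(E\setminus X))$.
   Context: For a finite directed graph $E=(E^0,E^1,s,r)$, a sink is a vertex $v$ with $s^{-1}(v)=\emptyset$ and a source is a vertex $v$ with $r^{-1}(v)=\emptyset$. $E\setminus X$ is the graph with vertex set $E^0\setminus X$ and edge set $E^1$ minus all edges having source or range in $X$. The path algebra $KF$ has basis the paths of $F$ (vertices as length-0 paths) with concatenation product; standard filtration $V_n=$ span of paths of length $\le n$; $\mathrm{h}_{\mathrm{alg}}(KF)=0$ if $KF$ is finite-dimensional and $\limsup_n\frac1n\log\dim(V_n/V_{n-1})$ otherwise. *)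

theory Defs
  imports "HOL-Analysis.Analysis"
begin

record ('v, 'e) dgraph =
  verts :: "'v set"
  arcs  :: "'e set"
  src   :: "'e \<Rightarrow> 'v"
  rng   :: "'e \<Rightarrow> 'v"

definition finite_dgraph :: "('v, 'e) dgraph \<Rightarrow> bool" where
  "finite_dgraph G \<longleftrightarrow> finite (verts G) \<and> finite (arcs G) \<and>
     (\<forall>e \<in> arcs G. src G e \<in> verts G \<and> rng G e \<in> verts G)"

definition sinks :: "('v, 'e) dgraph \<Rightarrow> 'v set" where
  "sinks G = {v \<in> verts G. \<not> (\<exists>e \<in> arcs G. src G e = v)}"

definition sources :: "('v, 'e) dgraph \<Rightarrow> 'v set" where
  "sources G = {v \<in> verts G. \<not> (\<exists>e \<in> arcs G. rng G e = v)}"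

definition remove_verts :: "('v, 'e) dgraph \<Rightarrow> 'v set \<Rightarrow> ('v, 'e) dgraph" where
  "remove_verts G X = \<lparr> verts = verts G - X,
     arcs = {e \<in> arcs G. src G e \<notin> X \<and> rng G e \<notin> X},
     src = src G, rng = rng G \<rparr>"

definition edge_paths :: "('v, 'e) dgraph \<Rightarrow> 'e list set" where
  "edge_paths G = {es. es \<noteq> [] \<and> set es \<subseteq> arcs G \<and>
     (\<forall>i. Suc i < length es \<longrightarrow> rng G (es ! i) = src G (es ! Suc i))}"

text \<open>The basis of the path algebra KF: all paths of F (vertices as length-0 paths).\<close>
definition paths :: "('v, 'e) dgraph \<Rightarrow> ('v + 'e list) set" where
  "paths G = Inl ` verts G \<union> Inr ` edge_paths G"

fun path_length :: "'v + 'e list \<Rightarrow> nat" where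
  "path_length (Inl v) = 0"
| "path_length (Inr es) = length es"

text \<open>dim (V_n / V_(n-1)) for the standard filtration V_n = span of paths of length \<le> n:
  since the paths form a basis, this is the number of paths of length exactly n.\<close>
definition layer_dim :: "('v, 'e) dgraph \<Rightarrow> nat \<Rightarrow> nat" where
  "layer_dim G n = card {p \<in> paths G. path_length p = n}"

definition h_alg :: "('v, 'e) dgraph \<Rightarrow> ereal" where
  "h_alg G = (if finite (paths G) then 0
              else limsup (\<lambda>n. ereal (ln (real (layer_dim G n)) / real n)))"

end

theory Submission
  imports Defs
begin

definition ep :: "('v, 'e) dgraph \<Rightarrow> nat \<Rightarrow> 'e list set" where
  "ep G k = {es \<in> edge_paths G. length es = k}"

lemma layer_dim_0: "layer_dim G 0 = card (verts G)"
proof -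
  have "{p \<in> paths G. path_length p = 0} = Inl ` verts G"
    by (auto simp: paths_def edge_paths_def)
  then show ?thesis unfolding layer_dim_def by (simp add: card_image)
qed

lemma layer_dim_pos: "n > 0 \<Longrightarrow> layer_dim G n = card (ep G n)"
proof -
  assume n: "n > 0"
  have "{p \<in> paths G. path_length p = n} = Inr ` ep G n"
    using n by (auto simp: paths_def ep_def)
  then show ?thesis unfolding layer_dim_def by (simp add: card_image)
qed

lemma finite_ep: "finite (arcs G) \<Longrightarrow> finite (ep G n)"
proof -
  assume f: "finite (arcs G)"
  have "ep G n \<subseteq> {xs. set xs \<subseteq> arcs G \<and> length xs = n}"
    by (auto simp: ep_def edge_paths_def)
  then show ?thesis using finite_lists_length_eq[OF f] finite_subset by blast
qed

lemma ep_prefix: "xs @ ys \<in> edge_paths G \<Longrightarrow> xs \<noteq> [] \<Longrightarrow> xs \<in> edge_paths G"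
proof -
  assume a: "xs @ ys \<in> edge_paths G" "xs \<noteq> []"
  show ?thesis unfolding edge_paths_def
  proof (intro CollectI conjI allI impI)
    fix i assume i: "Suc i < length xs"
    have "rng G ((xs@ys) ! i) = src G ((xs@ys) ! Suc i)"
      using a(1) i unfolding edge_paths_def by auto
    then show "rng G (xs ! i) = src G (xs ! Suc i)" using i by (simp add: nth_append)
  qed (use a in \<open>auto simp: edge_paths_def\<close>)
qed

lemma ep_suffix: "xs @ ys \<in> edge_paths G \<Longrightarrow> ys \<noteq> [] \<Longrightarrow> ys \<in> edge_paths G"
proof -
  assume a: "xs @ ys \<in> edge_paths G" "ys \<noteq> []"
  show ?thesis unfolding edge_paths_def
  proof (intro CollectI conjI allI impI)
    fix i assume i: "Suc i < length ys"
    have ch: "\<forall>j. Suc j < length (xs@ys) \<longrightarrow> rng G ((xs@ys) ! j) = src G ((xs@ys) ! Suc j)"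
      using a(1) unfolding edge_paths_def by blast
    have "rng G ((xs@ys) ! (length xs + i)) = src G ((xs@ys) ! Suc (length xs + i))"
      using spec[OF ch, of "length xs + i"] i by simp
    moreover have "(xs@ys) ! Suc (length xs + i) = ys ! Suc i"
      by (metis add_Suc_right nth_append_length_plus)
    ultimately show "rng G (ys ! i) = src G (ys ! Suc i)" by simp
  qed (use a in \<open>auto simp: edge_paths_def\<close>)
qed

lemma epF_iff: "es \<in> edge_paths (remove_verts G X) \<longleftrightarrow>
   es \<in> edge_paths G \<and> (\<forall>x\<in>set es. src G x \<notin> X \<and> rng G x \<notin> X)"
  by (auto simp: edge_paths_def remove_verts_def)

lemma interior:
  assumes fg: "finite_dgraph E" and X: "X \<subseteq> sinks E \<union> sources E"
    and es: "es \<in> edge_paths E" and i: "i < length es"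
  shows "0 < i \<Longrightarrow> src E (es ! i) \<notin> X"
    and "i < length es - 1 \<Longrightarrow> rng E (es ! i) \<notin> X"
proof -
  have arcs: "\<And>j. j < length es \<Longrightarrow> es ! j \<in> arcs E"
    using es unfolding edge_paths_def by auto
  have ch: "\<And>j. Suc j < length es \<Longrightarrow> rng E (es ! j) = src E (es ! Suc j)"
    using es unfolding edge_paths_def by auto
  have key: "\<And>j. Suc j < length es \<Longrightarrow> rng E (es ! j) \<notin> X"
  proof
    fix j assume j: "Suc j < length es" and inX: "rng E (es ! j) \<in> X"
    have a1: "es ! j \<in> arcs E" "es ! Suc j \<in> arcs E" using arcs j by auto
    have "rng E (es ! j) \<notin> sinks E" using a1 ch[OF j] by (auto simp: sinks_def)
    moreover have "rng E (es ! j) \<notin> sources E" using a1 by (auto simp: sources_def)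
    ultimately show False using inX X by blast
  qed
  show "0 < i \<Longrightarrow> src E (es ! i) \<notin> X"
  proof -
    assume "0 < i"
    then obtain j where "i = Suc j" by (cases i) auto
    then show ?thesis using key[of j] ch[of j] i by auto
  qed
  show "i < length es - 1 \<Longrightarrow> rng E (es ! i) \<notin> X" using key[of i] by auto
qed

lemma decomp:
  assumes fg: "finite_dgraph E" and X: "X \<subseteq> sinks E \<union> sources E"
    and es: "es \<in> ep E n" and n: "n \<ge> 3"
  shows "es \<in> ep (remove_verts E X) n
     \<union> (\<lambda>(e,p). e#p) ` (arcs E \<times> ep (remove_verts E X) (n-1))
     \<union> (\<lambda>(p,e). p@[e]) ` (ep (remove_verts E X) (n-1) \<times> arcs E)
     \<union> (\<lambda>(e,p,e'). e#p@[e']) ` (arcs E \<times> ep (remove_verts E X) (n-2) \<times> arcs E)"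
proof -
  have esE: "es \<in> edge_paths E" and len: "length es = n" using es by (auto simp: ep_def)
  obtain e rest where er: "es = e # rest" using len n by (cases es) auto
  have "rest \<noteq> []" using len n er by auto
  then obtain mid e' where rm: "rest = mid @ [e']" by (metis rev_exhaust)
  have es2: "es = e # mid @ [e']" using er rm by simp
  have lm: "length mid = n - 2" using len es2 by simp
  have midne: "mid \<noteq> []" using lm n by auto
  have ea: "e \<in> arcs E" "e' \<in> arcs E" using esE es2 by (auto simp: edge_paths_def)
  have midok: "\<forall>x\<in>set mid. src E x \<notin> X \<and> rng E x \<notin> X"
  proof
    fix x assume "x \<in> set mid"
    then obtain j where j: "j < length mid" "x = mid ! j" by (metis in_set_conv_nth)
    have xe: "es ! Suc j = x" using j es2 by (simp add: nth_append)
    have "Suc j < length es" "0 < Suc j" "Suc j < length es - 1" using j es2 by auto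
    then show "src E x \<notin> X \<and> rng E x \<notin> X"
      using interior[OF fg X esE, of "Suc j"] xe by auto
  qed
  have re: "rng E e \<notin> X"
    using interior(2)[OF fg X esE, of 0] es2 midne by auto
  have se: "src E e' \<notin> X"
  proof -
    have "es ! Suc (length mid) = e'" using es2 by (simp add: nth_append)
    then show ?thesis using interior(1)[OF fg X esE, of "Suc (length mid)"] es2 by auto
  qed
  have p1: "mid @ [e'] \<in> edge_paths E" using ep_suffix[of "[e]" "mid @ [e']"] esE es2 by simp
  have p2: "e # mid \<in> edge_paths E" using ep_prefix[of "e # mid" "[e']"] esE es2 by simp
  have p3: "mid \<in> edge_paths E" using ep_suffix[of "[e]" mid] p2 midne by simp
  consider (a) "src E e \<notin> X" "rng E e' \<notin> X" | (b) "src E e \<in> X" "rng E e' \<notin> X"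
    | (c) "src E e \<notin> X" "rng E e' \<in> X" | (d) "src E e \<in> X" "rng E e' \<in> X" by blast
  then show ?thesis
  proof cases
    case a
    then have "es \<in> ep (remove_verts E X) n" using esE len es2 midok re se
      by (auto simp: ep_def epF_iff)
    then show ?thesis by blast
  next
    case b
    then have "mid @ [e'] \<in> ep (remove_verts E X) (n-1)" using p1 len es2 midok re se
      by (auto simp: ep_def epF_iff)
    then show ?thesis using es2 ea by blast
  next
    case c
    then have "e # mid \<in> ep (remove_verts E X) (n-1)" using p2 len es2 midok re se
      by (auto simp: ep_def epF_iff)
    then have "es \<in> (\<lambda>(p,e). p@[e]) ` (ep (remove_verts E X) (n-1) \<times> arcs E)"
      using es2 ea by (auto intro!: image_eqI[where x="(e#mid, e')"])
    then show ?thesis by blast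
  next
    case d
    then have "mid \<in> ep (remove_verts E X) (n-2)" using p3 lm midok
      by (auto simp: ep_def epF_iff)
    then have "es \<in> (\<lambda>(e,p,e'). e#p@[e']) ` (arcs E \<times> ep (remove_verts E X) (n-2) \<times> arcs E)"
      using es2 ea by (auto intro!: image_eqI[where x="(e,mid, e')"])
    then show ?thesis by blast
  qed
qed

lemma limsup_main:
  fixes a b :: "nat \<Rightarrow> nat" and D :: nat
  assumes ab: "\<And>n. a n \<le> b n"
    and bd: "\<And>n. n \<ge> 3 \<Longrightarrow> b n \<le> D * max (a n) (max (a (n-1)) (a (n-2)))"
    and D: "D > 0"
  shows "limsup (\<lambda>n. ereal (ln (real (b n)) / real n)) = limsup (\<lambda>n. ereal (ln (real (a n)) / real n))"
    (is "limsup ?g = limsup ?f")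
proof (rule antisym)
  have lnm: "ln (real x) \<le> ln (real y)" if "x \<le> y" for x y :: nat
  proof (cases "x = 0")
    case True
    then show ?thesis by (cases "y = 0") auto
  next
    case False
    then show ?thesis using that by simp
  qed
  show "limsup ?f \<le> limsup ?g"
    by (intro Limsup_mono always_eventually allI)
       (simp add: divide_right_mono lnm[OF ab])
  let ?L = "limsup ?f"
  have L0: "0 \<le> ?L"
  proof -
    have "limsup (\<lambda>n. (0::ereal)) \<le> ?L"
      by (intro Limsup_mono always_eventually allI)
         (simp add: lnm[of 0, simplified])
    then show ?thesis by (simp add: Limsup_const)
  qed
  show "limsup ?g \<le> ?L"
    unfolding Limsup_le_iff
  proof (intro allI impI)
    fix y :: ereal assume y: "?L < y"
    show "\<forall>\<^sub>F n in sequentially. ?g n < y"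
    proof (cases y)
      case PInf
      then show ?thesis by simp
    next
      case MInf
      then show ?thesis using y by simp
    next
      case (real r)
      obtain z where z: "?L < ereal z" "ereal z < y" using ereal_dense2[OF y] by blast
      have zr: "z < r" using z real by simp
      have z0: "0 < z" using L0 z(1) by (metis ereal_less(2) order_le_less_trans)
      have "\<forall>\<^sub>F n in sequentially. ?f n < ereal z" using Limsup_lessD[OF z(1)] .
      then obtain N where N: "\<And>n. n \<ge> N \<Longrightarrow> ln (real (a n)) / real n < z"
        by (auto simp: eventually_sequentially)
      define K where "K = N + 3 + nat (ceiling (ln (real D) / (r - z))) + 1"
      show ?thesis unfolding eventually_sequentially
      proof (intro exI allI impI)
        fix n assume nK: "K \<le> n"
        have n3: "n \<ge> 3" and nN: "n \<ge> N + 3" using nK by (auto simp: K_def)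
        have nl: "real n > ln (real D) / (r - z)"
        proof -
          have "ln (real D) / (r - z) \<le> real (nat (ceiling (ln (real D) / (r - z))))"
            by linarith
          also have "\<dots> < real n" using nK by (simp add: K_def)
          finally show ?thesis .
        qed
        have nl2: "ln (real D) < (r - z) * real n"
          using nl zr by (simp add: pos_divide_less_eq mult.commute)
        have ak: "ln (real (a k)) < z * real n" if "k \<in> {n-2, n-1, n}" for k
        proof -
          have k1: "k \<ge> N" "k \<ge> 1" "k \<le> n" using that nN by auto
          have "ln (real (a k)) / real k < z" using N[OF k1(1)] .
          then have "ln (real (a k)) < z * real k" using k1(2) by (simp add: pos_divide_less_eq)
          also have "\<dots> \<le> z * real n" using k1(3) z0 by simp
          finally show ?thesis .
        qed
        define M where "M = max (a n) (max (a (n-1)) (a (n-2)))"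
        have "M \<in> {a (n-2), a (n-1), a n}" unfolding M_def by (auto simp: max_def)
        then have lM: "ln (real M) < z * real n" using ak by auto
        have bM: "b n \<le> D * M" using bd[OF n3] by (simp add: M_def)
        show "?g n < y"
        proof (cases "b n = 0")
          case True
          then show ?thesis using real zr z0 by simp
        next
          case False
          then have M0: "M > 0" using bM by (cases "M = 0") auto
          have "ln (real (b n)) \<le> ln (real (D * M))" using lnm[OF bM] .
          also have "\<dots> = ln (real D) + ln (real M)" using M0 D by (simp add: ln_mult)
          also have "\<dots> < (r - z) * real n + z * real n" using nl2 lM by linarith
          also have "\<dots> = r * real n" by (simp add: algebra_simps)
          finally have "ln (real (b n)) < r * real n" .
          then have "ln (real (b n)) / real n < r" using n3 by (simp add: pos_divide_less_eq)
          then show ?thesis using real by simp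
        qed
      qed
    qed
  qed
qed

lemma a_le_b:
  assumes fg: "finite_dgraph E"
  shows "layer_dim (remove_verts E X) n \<le> layer_dim E n"
proof (cases "n = 0")
  case True
  then show ?thesis using fg
    by (simp add: layer_dim_0 remove_verts_def finite_dgraph_def card_mono)
next
  case False
  have "ep (remove_verts E X) n \<subseteq> ep E n" by (auto simp: ep_def epF_iff)
  moreover have "finite (ep E n)" using fg finite_ep by (auto simp: finite_dgraph_def)
  ultimately show ?thesis using False by (simp add: layer_dim_pos card_mono)
qed

lemma b_bound:
  assumes fg: "finite_dgraph E" and X: "X \<subseteq> sinks E \<union> sources E" and n: "n \<ge> 3"
  shows "layer_dim E n \<le> (card (arcs E) + 1)^2 * max (layer_dim (remove_verts E X) n)
     (max (layer_dim (remove_verts E X) (n-1)) (layer_dim (remove_verts E X) (n-2)))"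
proof -
  let ?F = "remove_verts E X"
  let ?m = "card (arcs E)"
  let ?A1 = "(\<lambda>(e,p). e#p) ` (arcs E \<times> ep ?F (n-1))"
  let ?A2 = "(\<lambda>(p,e). p@[e]) ` (ep ?F (n-1) \<times> arcs E)"
  let ?A3 = "(\<lambda>(e,p,e'). e#p@[e']) ` (arcs E \<times> ep ?F (n-2) \<times> arcs E)"
  have fa: "finite (arcs E)" using fg by (simp add: finite_dgraph_def)
  have fF: "finite (ep ?F k)" for k
  proof -
    have "ep ?F k \<subseteq> ep E k" by (auto simp: ep_def epF_iff)
    then show ?thesis using finite_ep[OF fa] finite_subset by blast
  qed
  define M where "M = max (layer_dim ?F n) (max (layer_dim ?F (n-1)) (layer_dim ?F (n-2)))"
  have c0: "card (ep ?F n) \<le> M" using n by (simp add: M_def layer_dim_pos)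
  have c1: "card (ep ?F (n-1)) \<le> M" using n by (simp add: M_def layer_dim_pos)
  have c2: "card (ep ?F (n-2)) \<le> M" using n by (simp add: M_def layer_dim_pos)
  have "ep E n \<subseteq> ep ?F n \<union> ?A1 \<union> ?A2 \<union> ?A3" using decomp[OF fg X _ n] by blast
  then have "card (ep E n) \<le> card (ep ?F n \<union> ?A1 \<union> ?A2 \<union> ?A3)"
    by (intro card_mono) (auto simp: fa fF)
  also have "\<dots> \<le> card (ep ?F n) + card ?A1 + card ?A2 + card ?A3"
    by (meson add_mono card_Un_le le_refl order_trans)
  also have "\<dots> \<le> card (ep ?F n) + ?m * card (ep ?F (n-1)) + card (ep ?F (n-1)) * ?m
       + ?m * (card (ep ?F (n-2)) * ?m)"
    by (intro add_mono order_trans[OF card_image_le]) (auto simp: fa fF card_cartesian_product)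
  also have "\<dots> \<le> M + ?m * M + M * ?m + ?m * (M * ?m)"
    by (intro add_mono mult_le_mono c0 c1 c2 le_refl)
  also have "\<dots> = (?m + 1)^2 * M" by (simp add: power2_eq_square algebra_simps)
  finally show ?thesis using n by (simp add: layer_dim_pos M_def)
qed

lemma finite_paths_limsup:
  assumes "finite (paths G)"
  shows "limsup (\<lambda>n. ereal (ln (real (layer_dim G n)) / real n)) = 0"
proof -
  have "finite (path_length ` paths G)" using assms by simp
  then obtain N where N: "\<And>p. p \<in> paths G \<Longrightarrow> path_length p < N"
    by (meson finite_nat_set_iff_bounded imageI)
  have "\<forall>\<^sub>F n in sequentially. ereal (ln (real (layer_dim G n)) / real n) = 0"
    unfolding eventually_sequentially
  proof (intro exI allI impI)
    fix n assume "N \<le> n"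
    then have "{p \<in> paths G. path_length p = n} = {}" using N by fastforce
    then have "layer_dim G n = 0" unfolding layer_dim_def by (metis card.empty)
    then show "ereal (ln (real (layer_dim G n)) / real n) = 0" by simp
  qed
  then have "limsup (\<lambda>n. ereal (ln (real (layer_dim G n)) / real n)) = limsup (\<lambda>n. 0::ereal)"
    by (rule Limsup_eq)
  then show ?thesis by (simp add: Limsup_const)
qed

theorem corollary5p5:
  fixes E :: "('v, 'e) dgraph" and X :: "'v set"
  assumes "finite_dgraph E"
    and "X \<subseteq> sinks E \<union> sources E"
  shows "h_alg E = h_alg (remove_verts E X)"
proof -
  let ?F = "remove_verts E X"
  have D0: "(card (arcs E) + 1)^2 > (0::nat)" by simp
  have eq: "limsup (\<lambda>n. ereal (ln (real (layer_dim E n)) / real n))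
      = limsup (\<lambda>n. ereal (ln (real (layer_dim ?F n)) / real n))"
    by (rule limsup_main[OF a_le_b[OF assms(1)] b_bound[OF assms] D0])
  have s1: "edge_paths ?F \<subseteq> edge_paths E" using epF_iff by blast
  have s2: "verts ?F \<subseteq> verts E" by (auto simp: remove_verts_def)
  have sub: "paths ?F \<subseteq> paths E"
    unfolding paths_def using s1 s2 by blast
  show ?thesis
  proof (cases "finite (paths E)")
    case True
    then have "finite (paths ?F)" using sub finite_subset by blast
    then show ?thesis using True by (simp add: h_alg_def)
  next
    case False
    show ?thesis
    proof (cases "finite (paths ?F)")
      case True
      then show ?thesis using False eq finite_paths_limsup[OF True] by (simp add: h_alg_def)
    next
      case False2: False
      then show ?thesis using False eq by (simp add: h_alg_def)
    qed
  qed
qed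

end
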